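(* Let $f:M^n\to Q^n$ be a Lagrangian immersion, fix $A\in\mathcal A$ with associated one-form $s$, and let $\{e_1,\dots,e_n\}$ be a local orthonormal frame and $\theta_1,\dots,\theta_n$ local angle functions with $Ae_j=\cos(2\theta_j)e_j-\sin(2\theta_j)Je_j$. Then for all $i,j,k=1,\dots,n$ with $j\neq k$: $$e_i(\theta_j)=h^i_{jj}-\tfrac12 s(e_i),\qquad \sin(\theta_j-\theta_k)\,\omega_j^k(e_i)=\cos(\theta_j-\theta_k)\,h^k_{ij}.$$
   Context: $Q^n=\{[z]:z_0^2+\cdots+z_{n+1}^2=0\}\subset\mathbb{C}P^{n+1}(4)$ (Fubini–Study metric of holomorphic sectional curvature $4$, complex structure $J$), with induced metric $g$ and complex structure $J$. $\mathcal A$ is the set of shape operators of $Q^n$ in $\mathbb{C}P^{n+1}(4)$ associated with (local) unit normal vector fields $\xi$; each is a symmetric involution anticommuting with $J$. For $A\in\mathcal A$ with unit normal $\xi$ there is a one-form $s$ on $Q^n$ with $\nabla^{\mathbb{C}P^{n+1}}_X\xi=-AX+s(X)J\xi$ and $\nabla^{Q^n}_XA=s(X)JA$ for $X$ tangent to $Q^n$. An immersion $f:M^n\to Q^n$ is Lagrangian if $J$ maps tangent spaces of $M$ into normal spaces. Writing $AX=BX-JCX$ with $BX,CX$ tangent, $B$ and $C$ are simultaneously diagonalizable by a local orthonormal frame $\{e_j\}$ with $Be_j=\cos(2\theta_j)e_j$, $Ce_j=\sin(2\theta_j)e_j$; the $\theta_j$ (defined mod $\pi$) are the local angle functions. $h$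 is the second fundamental form of $f$, $h^k_{ij}=g(h(e_i,e_j),Je_k)$ (totally symmetric in $i,j,k$), $\nabla$ is the induced Levi-Civita connection of $M$, and $\omega_j^k(X)=g(\nabla_Xe_j,e_k)$. *)

theory Defs
  imports "HOL-Analysis.Analysis"
begin

text \<open>C^{n+2} is complex^'c with CARD('c) = n + 2; CP^{n+1}(4) is the
  Hopf quotient of the unit sphere S^{2n+3}(1) in C^{n+2}.  A Lagrangian immersion
  f : M^n -> Q^n is described locally (on a chart U, an open subset of real^'m,
  CARD('m) = n) by a horizontal lift F : U -> S^{2n+3} with sum_c F_c^2 = 0.
  Tangent vectors of CP^{n+1} at f(x) are identified with horizontal vectors at F(x)
  (orthogonal to F(x) and i F(x)); the Levi-Civita connection of CP^{n+1} is the
  horizontal part of the flat derivative of C^{n+2}.\<close>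

definition cinner :: "complex^'c \<Rightarrow> complex^'c \<Rightarrow> complex" where
  "cinner v w = (\<Sum>c\<in>UNIV. v$c * cnj (w$c))"

definition cbil :: "complex^'c \<Rightarrow> complex^'c \<Rightarrow> complex" where
  "cbil v w = (\<Sum>c\<in>UNIV. v$c * w$c)"

definition cconj :: "complex^'c \<Rightarrow> complex^'c" where
  "cconj v = (\<chi> c. cnj (v$c))"

definition gR :: "complex^'c \<Rightarrow> complex^'c \<Rightarrow> real" where
  "gR v w = Re (cinner v w)"

definition Jv :: "complex^'c \<Rightarrow> complex^'c" where
  "Jv v = (\<chi> c. \<i> * v$c)"

text \<open>Horizontal lift of the tangent space of Q^n at [z] (z on the unit sphere,
  cbil z z = 0): vectors orthogonal to z, i z and with sum_c z_c v_c = 0.\<close>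
definition QT :: "complex^'c \<Rightarrow> complex^'c \<Rightarrow> bool" where
  "QT z v \<longleftrightarrow> cinner v z = 0 \<and> cbil z v = 0"

text \<open>Orthogonal projection onto QT z (z, conj z are orthonormal when z is on Q).\<close>
definition projQ :: "complex^'c \<Rightarrow> complex^'c \<Rightarrow> complex^'c" where
  "projQ z v = v - cinner v z *s z - cinner v (cconj z) *s cconj z"

text \<open>Shape operator A of Q^n in CP^{n+1} w.r.t. the unit normal xi, applied to the
  tangent vector X of M (pushed forward by F): A X = - (nabla^{CP}_X xi)^{T Q}.
  dxi x X is the flat derivative of xi along X.\<close>
definition shapeA :: "(real^'m \<Rightarrow> complex^'c) \<Rightarrow> (real^'m \<Rightarrow> real^'m \<Rightarrow> complex^'c)
    \<Rightarrow> real^'m \<Rightarrow> real^'m \<Rightarrow> complex^'c" where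
  "shapeA F dxi x X = - projQ (F x) (dxi x X)"

text \<open>The one-form s: nabla^{CP}_X xi = - A X + s(X) J xi, so s(X) = g(nabla_X xi, J xi).\<close>
definition sform :: "(real^'m \<Rightarrow> complex^'c) \<Rightarrow> (real^'m \<Rightarrow> real^'m \<Rightarrow> complex^'c)
    \<Rightarrow> real^'m \<Rightarrow> real^'m \<Rightarrow> real" where
  "sform xi dxi x X = gR (dxi x X) (Jv (xi x))"

text \<open>dE j x w is the flat derivative at x along w of E_j = dF(e_j).
  omega_j^k(e_i) = g(nabla_{e_i} e_j, e_k) (Gauss formula: tangential part of the
  ambient derivative), and h^k_{ij} = g(h(e_i,e_j), J e_k) (J e_k is tangent to Q,
  normal to M, so only the second fundamental form of M in Q contributes).\<close>
definition omega :: "(real^'m \<Rightarrow> real^'m \<Rightarrow> complex^'c) \<Rightarrow> ('m \<Rightarrow> real^'m \<Rightarrow> real^'m)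
    \<Rightarrow> ('m \<Rightarrow> real^'m \<Rightarrow> real^'m \<Rightarrow> complex^'c) \<Rightarrow> 'm \<Rightarrow> 'm \<Rightarrow> 'm \<Rightarrow> real^'m \<Rightarrow> real" where
  "omega dF e dE j k i x = gR (dE j x (e i x)) (dF x (e k x))"

definition hcomp :: "(real^'m \<Rightarrow> real^'m \<Rightarrow> complex^'c) \<Rightarrow> ('m \<Rightarrow> real^'m \<Rightarrow> real^'m)
    \<Rightarrow> ('m \<Rightarrow> real^'m \<Rightarrow> real^'m \<Rightarrow> complex^'c) \<Rightarrow> 'm \<Rightarrow> 'm \<Rightarrow> 'm \<Rightarrow> real^'m \<Rightarrow> real" where
  "hcomp dF e dE k i j x = gR (dE j x (e i x)) (Jv (dF x (e k x)))"

end

theory Submission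
  imports Defs
begin



lemma cinner_cconj_right: "cinner v (cconj w) = cbil v w"
  by (simp add: cinner_def cbil_def cconj_def)
lemma cbil_comm: "cbil v w = cbil w v"
  by (simp add: cbil_def mult.commute)
lemma cinner_cconj_both: "cinner (cconj v) (cconj w) = cnj (cinner v w)"
  by (simp add: cinner_def cconj_def)
lemma cinner_cconj_left: "cinner (cconj v) w = cnj (cbil v w)"
  by (simp add: cinner_def cbil_def cconj_def)
lemma cinner_sym: "cinner w v = cnj (cinner v w)"
  by (simp add: cinner_def mult.commute)
lemma cinner_scale_left: "cinner (a *s v) w = a * cinner v w"
  by (simp add: cinner_def sum_distrib_left mult.assoc)
lemma cinner_scale_right: "cinner v (a *s w) = cnj a * cinner v w"
  by (simp add: cinner_def sum_distrib_left mult.assoc mult.left_commute)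
lemma cbil_scale_left: "cbil (a *s v) w = a * cbil v w"
  by (simp add: cbil_def sum_distrib_left mult.assoc)
lemma cbil_scale_right: "cbil v (a *s w) = a * cbil v w"
  by (simp add: cbil_def sum_distrib_left mult.assoc mult.left_commute)
lemma cinner_add_left: "cinner (v + u) w = cinner v w + cinner u w"
  by (simp add: cinner_def sum.distrib distrib_right)
lemma cinner_diff_left: "cinner (v - u) w = cinner v w - cinner u w"
  by (simp add: cinner_def sum_subtractf left_diff_distrib)
lemma cinner_add_right: "cinner w (v + u) = cinner w v + cinner w u"
  by (simp add: cinner_def sum.distrib distrib_left)
lemma cinner_diff_right: "cinner w (v - u) = cinner w v - cinner w u"
  by (simp add: cinner_def sum_subtractf right_diff_distrib)
lemma cinner_minus_left: "cinner (- v) w = - cinner v w"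
  by (simp add: cinner_def sum_negf)
lemma cbil_add_left: "cbil (v + u) w = cbil v w + cbil u w"
  by (simp add: cbil_def sum.distrib distrib_right)
lemma cbil_diff_left: "cbil (v - u) w = cbil v w - cbil u w"
  by (simp add: cbil_def sum_subtractf left_diff_distrib)
lemma cbil_minus_left: "cbil (- v) w = - cbil v w"
  by (simp add: cbil_def sum_negf)
lemma Jv_scale: "Jv v = \<i> *s v"
  by (simp add: Jv_def vec_eq_iff)
lemma scaleR_scale: "(r::real) *\<^sub>R (v::complex^'c) = complex_of_real r *s v"
proof (subst vec_eq_iff, intro allI)
  fix i show "(r *\<^sub>R v) $ i = (complex_of_real r *s v) $ i"
  proof -
    have "(r *\<^sub>R v) $ i = r *\<^sub>R (v $ i)" by simp
    also have "\<dots> = complex_of_real r * v $ i" by (simp add: scaleR_conv_of_real)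
    finally show ?thesis by simp
  qed
qed
lemma gR_Re: "gR v w = Re (cinner v w)" by (simp add: gR_def)
lemma gR_J_right: "gR v (Jv w) = Im (cinner v w)"
  by (simp add: gR_def Jv_scale cinner_scale_right)
lemma gR_J_left: "gR (Jv v) w = - Im (cinner v w)"
  by (simp add: gR_def Jv_scale cinner_scale_left)
lemma cinner_self_zero: "cinner v v = 0 \<Longrightarrow> v = 0"
proof -
  assume h: "cinner v v = 0"
  have "cinner v v = (\<Sum>c\<in>UNIV. complex_of_real ((cmod (v$c))^2))"
    unfolding cinner_def by (rule sum.cong) (simp_all add: complex_norm_square[symmetric] del: of_real_power)
  hence "(\<Sum>c\<in>UNIV. (cmod (v$c))^2) = 0" using h
    by (metis of_real_eq_0_iff of_real_sum)
  hence "\<forall>c\<in>UNIV. (cmod (v$c))^2 = 0"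
    by (subst sum_nonneg_eq_0_iff[symmetric]) auto
  thus "v = 0" by (simp add: vec_eq_iff)
qed

lemma bl_gR_left: "bounded_linear (\<lambda>a. gR a c)"
proof -
  have "linear (\<lambda>a. gR a c)"
    by (rule linearI) (simp_all add: gR_def cinner_add_left scaleR_scale cinner_scale_left)
  thus ?thesis by (simp add: linear_conv_bounded_linear)
qed

lemma has_derivative_cinner:
  assumes "(f has_derivative f') (at x)" "(g has_derivative g') (at x)"
  shows "((\<lambda>y. cinner (f y) (g y)) has_derivative (\<lambda>w. cinner (f' w) (g x) + cinner (f x) (g' w))) (at x)"
proof -
  have cf: "\<And>c. ((\<lambda>y. f y $ c) has_derivative (\<lambda>w. f' w $ c)) (at x)"
    by (rule bounded_linear.has_derivative[OF bounded_linear_vec_nth assms(1)])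
  have cg: "\<And>c. ((\<lambda>y. cnj (g y $ c)) has_derivative (\<lambda>w. cnj (g' w $ c))) (at x)"
    by (rule bounded_linear.has_derivative[OF bounded_linear_cnj
          bounded_linear.has_derivative[OF bounded_linear_vec_nth assms(2)]])
  have "((\<lambda>y. \<Sum>c\<in>UNIV. f y $ c * cnj (g y $ c)) has_derivative
        (\<lambda>w. \<Sum>c\<in>UNIV. f x $ c * cnj (g' w $ c) + f' w $ c * cnj (g x $ c))) (at x)"
    by (rule has_derivative_sum, rule has_derivative_mult[OF cf cg])
  thus ?thesis
    by (simp add: cinner_def sum.distrib add.commute)
qed

lemma has_derivative_cbil:
  assumes "(f has_derivative f') (at x)" "(g has_derivative g') (at x)"
  shows "((\<lambda>y. cbil (f y) (g y)) has_derivative (\<lambda>w. cbil (f' w) (g x) + cbil (f x) (g' w))) (at x)"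
proof -
  have cf: "\<And>c. ((\<lambda>y. f y $ c) has_derivative (\<lambda>w. f' w $ c)) (at x)"
    by (rule bounded_linear.has_derivative[OF bounded_linear_vec_nth assms(1)])
  have cg: "\<And>c. ((\<lambda>y. g y $ c) has_derivative (\<lambda>w. g' w $ c)) (at x)"
    by (rule bounded_linear.has_derivative[OF bounded_linear_vec_nth assms(2)])
  have "((\<lambda>y. \<Sum>c\<in>UNIV. f y $ c * g y $ c) has_derivative
        (\<lambda>w. \<Sum>c\<in>UNIV. f x $ c * g' w $ c + f' w $ c * g x $ c)) (at x)"
    by (rule has_derivative_sum, rule has_derivative_mult[OF cf cg])
  thus ?thesis
    by (simp add: cbil_def sum.distrib add.commute)
qed

lemma deriv_eq_on_open:
  assumes "open U" "x \<in> U" "\<And>y. y \<in> U \<Longrightarrow> f y = g y"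
    "(f has_derivative f') (at x)" "(g has_derivative g') (at x)"
  shows "f' = g'"
proof -
  have "(g has_derivative f') (at x)"
    using has_derivative_transform_within_open[OF assms(4) assms(1,2)] assms(3) by blast
  thus ?thesis using has_derivative_unique assms(5) by blast
qed

lemma deriv_const_on_open:
  assumes "open U" "x \<in> U" "\<And>y. y \<in> U \<Longrightarrow> f y = c"
    "(f has_derivative f') (at x)"
  shows "f' w = 0"
  using deriv_eq_on_open[OF assms(1,2,3) assms(4) has_derivative_const] by simp

lemma has_derivative_cis:
  assumes "(f has_derivative f') (at x)"
  shows "((\<lambda>y. cis (f y)) has_derivative (\<lambda>w. \<i> * complex_of_real (f' w) * cis (f x))) (at x)"
proof -
  have c: "((\<lambda>y. cos (f y)) has_derivative (\<lambda>w. f' w * - sin (f x))) (at x)"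
    by (rule DERIV_compose_FDERIV[OF DERIV_cos assms])
  have s: "((\<lambda>y. sin (f y)) has_derivative (\<lambda>w. f' w * cos (f x))) (at x)"
    by (rule DERIV_compose_FDERIV[OF DERIV_sin assms])
  have "((\<lambda>y. complex_of_real (cos (f y)) + \<i> * complex_of_real (sin (f y))) has_derivative
     (\<lambda>w. complex_of_real (f' w * - sin (f x)) + \<i> * complex_of_real (f' w * cos (f x)))) (at x)"
    by (intro has_derivative_add has_derivative_of_real c
         bounded_linear.has_derivative[OF bounded_linear_mult_right has_derivative_of_real[OF s]])
  moreover have "\<And>y. cis (f y) = complex_of_real (cos (f y)) + \<i> * complex_of_real (sin (f y))"
    by (simp add: complex_eq_iff)
  moreover have "\<And>w. complex_of_real (f' w * - sin (f x)) + \<i> * complex_of_real (f' w * cos (f x))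
      = \<i> * complex_of_real (f' w) * cis (f x)"
    by (simp add: complex_eq_iff)
  ultimately show ?thesis by simp
qed



lemma sym_est:
  fixes \<phi> :: "'a::real_normed_vector \<Rightarrow> real"
  assumes U: "open U" "x \<in> U"
    and d1: "\<forall>y\<in>U. (\<phi> has_derivative \<phi>' y) (at y)"
    and d2: "((\<lambda>y. \<phi>' y u) has_derivative (\<lambda>w. B w u)) (at x)"
    and e: "\<epsilon> > 0"
  shows "\<exists>d>0. \<forall>t. 0 < t \<and> t < d \<longrightarrow>
    \<bar>\<phi> (x + t *\<^sub>R u + t *\<^sub>R w) - \<phi> (x + t *\<^sub>R u) - \<phi> (x + t *\<^sub>R w) + \<phi> x - t^2 * B w u\<bar>
      \<le> 2 * \<epsilon> * t^2 * (norm u + norm w)"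
proof -
  obtain r where r: "r > 0" "ball x r \<subseteq> U" using U open_contains_ball by blast
  have linB: "linear (\<lambda>w. B w u)" using d2 has_derivative_linear by blast
  from d2[unfolded has_derivative_at_alt] e obtain d1 where d1p: "d1 > 0" and
    d1e: "\<forall>y. norm (y - x) < d1 \<longrightarrow> norm (\<phi>' y u - \<phi>' x u - B (y - x) u) \<le> \<epsilon> * norm (y - x)"
    by blast
  define K where "K = norm u + norm w + 1"
  have K: "K > 0" "norm u \<le> K" "norm w \<le> K" "norm u + norm w \<le> K" unfolding K_def using norm_ge_zero[of u] norm_ge_zero[of w] by linarith+
  define d where "d = min r d1 / K"
  have dp: "d > 0" using r d1p K by (simp add: d_def)
  show ?thesis
  proof (intro exI[of _ d] conjI dp allI impI)
    fix t assume t: "0 < t \<and> t < d"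
    have tK: "t * K < min r d1" using t K unfolding d_def by (simp add: field_simps)
    have inb: "norm (s *\<^sub>R u + c *\<^sub>R w) < min r d1 \<and> norm (s *\<^sub>R u + c *\<^sub>R w) \<le> t * (norm u + norm w)"
      if "0 \<le> s" "s \<le> t" "c = 0 \<or> c = t" for s c
    proof -
      have "norm (s *\<^sub>R u + c *\<^sub>R w) \<le> norm (s *\<^sub>R u) + norm (c *\<^sub>R w)" by (rule norm_triangle_ineq)
      also have "\<dots> = s * norm u + \<bar>c\<bar> * norm w" using that by simp
      also have "\<dots> \<le> t * norm u + t * norm w"
        using that t by (intro add_mono mult_right_mono) auto
      finally have a: "norm (s *\<^sub>R u + c *\<^sub>R w) \<le> t * (norm u + norm w)" by (simp add: algebra_simps)
      have "t * (norm u + norm w) < min r d1"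
        using tK K(4) t by (meson le_less_trans mult_left_mono less_imp_le)
      with a show ?thesis by simp
    qed
    have inU: "x + (s *\<^sub>R u + c *\<^sub>R w) \<in> U" if "0 \<le> s" "s \<le> t" "c = 0 \<or> c = t" for s c
    proof -
      have "x + (s *\<^sub>R u + c *\<^sub>R w) \<in> ball x r" 
      proof -
        have dd: "\<And>v. dist x (x + v) = norm v" by (simp add: dist_norm)
        show ?thesis using inb[OF that] by (simp only: mem_ball dd) simp
      qed
      thus ?thesis using r by blast
    qed
    define g where "g s = \<phi> (x + s *\<^sub>R u + t *\<^sub>R w) - \<phi> (x + s *\<^sub>R u)" for s
    define g' where "g' s = (\<lambda>h. \<phi>' (x + s *\<^sub>R u + t *\<^sub>R w) (h *\<^sub>R u) - \<phi>' (x + s *\<^sub>R u) (h *\<^sub>R u))" for s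
    have gd: "(g has_derivative g' s) (at s within {0..t})" if "0 \<le> s" "s \<le> t" for s
    proof -
      have i1: "((\<lambda>s. x + s *\<^sub>R u + t *\<^sub>R w) has_derivative (\<lambda>h. h *\<^sub>R u)) (at s within {0..t})"
        by (auto intro!: derivative_eq_intros)
      have i2: "((\<lambda>s. x + s *\<^sub>R u) has_derivative (\<lambda>h. h *\<^sub>R u)) (at s within {0..t})"
        by (auto intro!: derivative_eq_intros)
      have m1: "x + s *\<^sub>R u + t *\<^sub>R w \<in> U" using inU[OF that, of t] by (simp add: add.assoc)
      have m2: "x + s *\<^sub>R u \<in> U" using inU[OF that, of 0] by simp
      have o1: "((\<lambda>s. \<phi> (x + s *\<^sub>R u + t *\<^sub>R w)) has_derivative (\<lambda>h. \<phi>' (x + s *\<^sub>R u + t *\<^sub>R w) (h *\<^sub>R u))) (at s within {0..t})"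
        using has_derivative_compose[OF i1] d1 m1 by blast
      have o2: "((\<lambda>s. \<phi> (x + s *\<^sub>R u)) has_derivative (\<lambda>h. \<phi>' (x + s *\<^sub>R u) (h *\<^sub>R u))) (at s within {0..t})"
        using has_derivative_compose[OF i2] d1 m2 by blast
      show ?thesis unfolding g_def g'_def by (rule has_derivative_diff[OF o1 o2])
    qed
    obtain \<sigma> where \<sigma>: "\<sigma> \<in> {0<..<t}" "g t - g 0 = g' \<sigma> (t - 0)"
      using mvt_simple[of 0 t g g'] gd t by auto
    define z1 where "z1 = x + (\<sigma> *\<^sub>R u + t *\<^sub>R w)"
    define z2 where "z2 = x + (\<sigma> *\<^sub>R u + 0 *\<^sub>R w)"
    have s01: "0 \<le> \<sigma>" "\<sigma> \<le> t" using \<sigma> by auto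
    have z1U: "z1 \<in> U" unfolding z1_def using inU[OF s01] by auto
    have z2U: "z2 \<in> U" unfolding z2_def using inU[OF s01, of 0] by simp
    have lin1: "linear (\<phi>' z1)" using d1 z1U has_derivative_linear by blast
    have lin2: "linear (\<phi>' z2)" using d1 z2U has_derivative_linear by blast
    have gt: "g t - g 0 = t * (\<phi>' z1 u - \<phi>' z2 u)"
      using \<sigma>(2) unfolding g'_def z1_def z2_def
      by (simp add: linear_cmul[OF lin1[unfolded z1_def]] linear_cmul[OF lin2[unfolded z2_def, simplified]]
          add.assoc right_diff_distrib)
    have n1: "norm (z1 - x) \<le> t * (norm u + norm w)" "norm (z1 - x) < d1"
      using inb[OF s01, of t] unfolding z1_def by auto
    have n2: "norm (z2 - x) \<le> t * (norm u + norm w)" "norm (z2 - x) < d1"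
      using inb[OF s01, of 0] unfolding z2_def by auto
    have e1: "\<bar>\<phi>' z1 u - \<phi>' x u - B (z1 - x) u\<bar> \<le> \<epsilon> * (t * (norm u + norm w))"
      
    proof -
      have "norm (\<phi>' z1 u - \<phi>' x u - B (z1 - x) u) \<le> \<epsilon> * norm (z1 - x)" using d1e n1(2) by blast
      also have "\<dots> \<le> \<epsilon> * (t * (norm u + norm w))" using n1(1) e by (simp add: mult_left_mono)
      finally show ?thesis by (simp only: real_norm_def)
    qed
    have e2: "\<bar>\<phi>' z2 u - \<phi>' x u - B (z2 - x) u\<bar> \<le> \<epsilon> * (t * (norm u + norm w))"
      
    proof -
      have "norm (\<phi>' z2 u - \<phi>' x u - B (z2 - x) u) \<le> \<epsilon> * norm (z2 - x)" using d1e n2(2) by blast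
      also have "\<dots> \<le> \<epsilon> * (t * (norm u + norm w))" using n2(1) e by (simp add: mult_left_mono)
      finally show ?thesis by (simp only: real_norm_def)
    qed
    have Bd: "B (z1 - x) u - B (z2 - x) u = t * B w u"
    proof -
      have "B (z1 - x) u - B (z2 - x) u = B ((z1 - x) - (z2 - x)) u"
        using real_vector.linear_diff[OF linB] by metis
      also have "(z1 - x) - (z2 - x) = t *\<^sub>R w" unfolding z1_def z2_def by simp
      finally show ?thesis using linear_cmul[OF linB] by simp
    qed
    have "\<bar>\<phi>' z1 u - \<phi>' z2 u - t * B w u\<bar> \<le> 2 * \<epsilon> * (t * (norm u + norm w))"
      using e1 e2 Bd by linarith
    hence "\<bar>t * (\<phi>' z1 u - \<phi>' z2 u) - t^2 * B w u\<bar> \<le> t * (2 * \<epsilon> * (t * (norm u + norm w)))"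
    proof -
      assume a: "\<bar>\<phi>' z1 u - \<phi>' z2 u - t * B w u\<bar> \<le> 2 * \<epsilon> * (t * (norm u + norm w))"
      have "\<bar>t * (\<phi>' z1 u - \<phi>' z2 u) - t^2 * B w u\<bar> = t * \<bar>\<phi>' z1 u - \<phi>' z2 u - t * B w u\<bar>"
      proof -
        have "t * (\<phi>' z1 u - \<phi>' z2 u) - t^2 * B w u = t * (\<phi>' z1 u - \<phi>' z2 u - t * B w u)"
          by (simp add: power2_eq_square algebra_simps)
        thus ?thesis using t by (simp add: abs_mult)
      qed
      thus ?thesis using a t by (simp add: mult_left_mono)
    qed
    moreover have "g t - g 0 = \<phi> (x + t *\<^sub>R u + t *\<^sub>R w) - \<phi> (x + t *\<^sub>R u) - \<phi> (x + t *\<^sub>R w) + \<phi> x"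
      unfolding g_def by simp
    ultimately show "\<bar>\<phi> (x + t *\<^sub>R u + t *\<^sub>R w) - \<phi> (x + t *\<^sub>R u) - \<phi> (x + t *\<^sub>R w) + \<phi> x - t^2 * B w u\<bar>
      \<le> 2 * \<epsilon> * t^2 * (norm u + norm w)"
      using gt by (simp add: power2_eq_square mult.assoc mult.left_commute)
  qed
qed

lemma second_deriv_sym:
  fixes \<phi> :: "'a::real_normed_vector \<Rightarrow> real"
  assumes U: "open U" "x \<in> U"
    and d1: "\<forall>y\<in>U. (\<phi> has_derivative \<phi>' y) (at y)"
    and d2: "\<And>v. ((\<lambda>y. \<phi>' y v) has_derivative (\<lambda>w. B w v)) (at x)"
  shows "B w u = B u w"
proof (rule ccontr)
  assume ne: "B w u \<noteq> B u w"
  define D where "D = \<bar>B w u - B u w\<bar>"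
  have Dp: "D > 0" using ne by (simp add: D_def)
  define \<epsilon> where "\<epsilon> = D / (8 * (norm u + norm w + 1))"
  have ep: "\<epsilon> > 0" using Dp norm_ge_zero[of u] norm_ge_zero[of w] unfolding \<epsilon>_def by (intro divide_pos_pos) (auto simp: add_nonneg_pos)
  obtain da where da: "da > 0" "\<forall>t. 0 < t \<and> t < da \<longrightarrow>
    \<bar>\<phi> (x + t *\<^sub>R u + t *\<^sub>R w) - \<phi> (x + t *\<^sub>R u) - \<phi> (x + t *\<^sub>R w) + \<phi> x - t^2 * B w u\<bar>
      \<le> 2 * \<epsilon> * t^2 * (norm u + norm w)"
    using sym_est[where u=u and w=w and B=B, OF U d1 d2[of u] ep] by blast
  obtain db where db: "db > 0" "\<forall>t. 0 < t \<and> t < db \<longrightarrow>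
    \<bar>\<phi> (x + t *\<^sub>R w + t *\<^sub>R u) - \<phi> (x + t *\<^sub>R w) - \<phi> (x + t *\<^sub>R u) + \<phi> x - t^2 * B u w\<bar>
      \<le> 2 * \<epsilon> * t^2 * (norm w + norm u)"
    using sym_est[where u=w and w=u and B=B, OF U d1 d2[of w] ep] by blast
  define t where "t = min da db / 2"
  have t: "0 < t" "t < da" "t < db" using da db by (auto simp: t_def)
  have comm: "x + t *\<^sub>R w + t *\<^sub>R u = x + t *\<^sub>R u + t *\<^sub>R w" by (simp add: algebra_simps)
  have A1: "\<bar>\<phi> (x + t *\<^sub>R u + t *\<^sub>R w) - \<phi> (x + t *\<^sub>R u) - \<phi> (x + t *\<^sub>R w) + \<phi> x - t^2 * B w u\<bar>
      \<le> 2 * \<epsilon> * t^2 * (norm u + norm w)" using da(2) t by blast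
  have A2: "\<bar>\<phi> (x + t *\<^sub>R u + t *\<^sub>R w) - \<phi> (x + t *\<^sub>R w) - \<phi> (x + t *\<^sub>R u) + \<phi> x - t^2 * B u w\<bar>
      \<le> 2 * \<epsilon> * t^2 * (norm u + norm w)" 
  proof -
    have "\<bar>\<phi> (x + t *\<^sub>R w + t *\<^sub>R u) - \<phi> (x + t *\<^sub>R w) - \<phi> (x + t *\<^sub>R u) + \<phi> x - t^2 * B u w\<bar>
      \<le> 2 * \<epsilon> * t^2 * (norm w + norm u)" using db(2) t by blast
    thus ?thesis by (simp only: comm add.commute[of "norm w"])
  qed
  have "t^2 * D \<le> 4 * \<epsilon> * t^2 * (norm u + norm w)"
  proof -
    have "t^2 * D = \<bar>t^2 * B w u - t^2 * B u w\<bar>" unfolding D_def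
      by (simp add: abs_mult right_diff_distrib[symmetric])
    also have "\<dots> \<le> 4 * \<epsilon> * t^2 * (norm u + norm w)" using A1 A2 by linarith
    finally show ?thesis .
  qed
  hence "t^2 * D \<le> t^2 * (4 * \<epsilon> * (norm u + norm w))" by (simp add: algebra_simps)
  hence "D \<le> 4 * \<epsilon> * (norm u + norm w)" using t by (simp add: mult_le_cancel_left_pos)
  also have "\<dots> < D"
  proof -
    have N: "0 \<le> norm u + norm w" by simp
    have X: "8 * (norm u + norm w + 1) > 0" using N by (simp add: add_nonneg_pos)
    have e8: "\<epsilon> * (8 * (norm u + norm w + 1)) = D" unfolding \<epsilon>_def using X by simp
    have p: "\<epsilon> * (norm u + norm w) \<ge> 0" using ep N by simp
    from e8 have "D = 8 * (\<epsilon> * (norm u + norm w)) + 8 * \<epsilon>" by (simp add: algebra_simps)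
    thus ?thesis using p ep by linarith
  qed
  finally show False by simp
qed

lemma cbil_cconj_right: "cbil v (cconj w) = cinner v w"
  by (simp add: cinner_def cbil_def cconj_def)
lemma cbil_cconj_left: "cbil (cconj a) b = cinner b a"
  by (simp add: cinner_def cbil_def cconj_def mult.commute)
lemma gR_sym: "gR a b = gR b a"
  by (simp add: gR_def cinner_sym[of a b])
lemma cinner_Jv_left: "cinner (Jv v) w = \<i> * cinner v w"
  by (simp add: Jv_scale cinner_scale_left)
lemma cbil_Jv_right: "cbil w (Jv v) = \<i> * cbil w v"
  by (simp add: Jv_scale cbil_scale_right)
lemma cinner_self_conj: "cinner (cconj v) (cconj v) = cnj (cinner v v)"
  by (rule cinner_cconj_both)

lemma conj_formula:
  assumes "cinner v v = 1" "cbil v v * cnj (cbil v v) = 1"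
  shows "cconj v = cnj (cbil v v) *s v"
proof -
  define c where "c = cnj (cbil v v)"
  define w where "w = cconj v - c *s v"
  have "cinner w w = cinner (cconj v) (cconj v) - cinner (cconj v) (c *s v)
      - cinner (c *s v) (cconj v) + cinner (c *s v) (c *s v)"
    unfolding w_def by (simp add: cinner_diff_left cinner_diff_right)
  also have "\<dots> = 1 - 1 - 1 + 1"
  proof -
    have 1: "cinner (cconj v) (cconj v) = 1" using assms(1) by (simp only: cinner_cconj_both) simp
    have 2: "cinner (cconj v) (c *s v) = 1"
      by (simp only: cinner_scale_right cinner_cconj_left c_def complex_cnj_cnj)
        (simp add: assms(2))
    have 3: "cinner (c *s v) (cconj v) = 1"
      by (simp only: cinner_cconj_right cbil_scale_left c_def) (simp add: assms(2) mult.commute)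
    have 4: "cinner (c *s v) (c *s v) = 1"
      by (simp only: cinner_scale_left cinner_scale_right assms(1) c_def complex_cnj_cnj)
        (simp add: assms(2) mult.commute)
    show ?thesis by (simp only: 1 2 3 4)
  qed
  finally have "cinner w w = 0" by simp
  hence "w = 0" by (rule cinner_self_zero)
  thus ?thesis unfolding w_def c_def by (simp only: right_minus_eq)
qed

lemma lin_gR_J: "linear (\<lambda>z. gR a (Jv z))"
  by (rule linearI) (simp_all add: gR_J_right cinner_add_right scaleR_scale cinner_scale_right)

lemma lin_basis:
  fixes f :: "real^'m \<Rightarrow> 'b::real_vector"
  assumes "linear f"
  shows "f v = (\<Sum>m\<in>UNIV. v $ m *\<^sub>R f (axis m 1))"
proof -
  have "v = (\<Sum>m\<in>UNIV. v $ m *\<^sub>R axis m 1)"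
    using basis_expansion[of v] by (simp add: scalar_mult_eq_scaleR)
  hence "f v = f (\<Sum>m\<in>UNIV. v $ m *\<^sub>R axis m 1)" by simp
  also have "\<dots> = (\<Sum>m\<in>UNIV. v $ m *\<^sub>R f (axis m 1))"
    by (simp add: real_vector.linear_sum[OF assms] linear_cmul[OF assms])
  finally show ?thesis .
qed



theorem proposition1:
  fixes U :: "(real^'m) set"
    and F :: "real^'m \<Rightarrow> complex^'c"
    and dF :: "real^'m \<Rightarrow> real^'m \<Rightarrow> complex^'c"
    and d2F :: "real^'m \<Rightarrow> real^'m \<Rightarrow> real^'m \<Rightarrow> complex^'c"
    and e :: "'m \<Rightarrow> real^'m \<Rightarrow> real^'m"
    and de :: "'m \<Rightarrow> real^'m \<Rightarrow> real^'m \<Rightarrow> real^'m"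
    and dE :: "'m \<Rightarrow> real^'m \<Rightarrow> real^'m \<Rightarrow> complex^'c"
    and \<theta> :: "'m \<Rightarrow> real^'m \<Rightarrow> real"
    and d\<theta> :: "'m \<Rightarrow> real^'m \<Rightarrow> real^'m \<Rightarrow> real"
    and \<xi> :: "real^'m \<Rightarrow> complex^'c"
    and d\<xi> :: "real^'m \<Rightarrow> real^'m \<Rightarrow> complex^'c"
  assumes dim: "CARD('c) = CARD('m) + 2"
    and U_open: "open U"
    and F_deriv: "\<forall>x\<in>U. (F has_derivative dF x) (at x)"
    and dF_deriv: "\<forall>x\<in>U. \<forall>v. ((\<lambda>y. dF y v) has_derivative (\<lambda>w. d2F x w v)) (at x)"
    and F_on_Q: "\<forall>x\<in>U. cinner (F x) (F x) = 1 \<and> cbil (F x) (F x) = 0"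
    and F_horizontal: "\<forall>x\<in>U. \<forall>v. cinner (dF x v) (F x) = 0"
    and F_immersion: "\<forall>x\<in>U. inj (dF x)"
    and F_lagrangian: "\<forall>x\<in>U. \<forall>v w. gR (Jv (dF x v)) (dF x w) = 0"
    and xi_deriv: "\<forall>x\<in>U. (\<xi> has_derivative d\<xi> x) (at x)"
    and xi_unit: "\<forall>x\<in>U. cinner (\<xi> x) (\<xi> x) = 1"
    and xi_normal: "\<forall>x\<in>U. cinner (\<xi> x) (F x) = 0 \<and> (\<forall>v. QT (F x) v \<longrightarrow> gR (\<xi> x) v = 0)"
    and e_deriv: "\<forall>j. \<forall>x\<in>U. (e j has_derivative de j x) (at x)"
    and E_deriv: "\<forall>j. \<forall>x\<in>U. ((\<lambda>y. dF y (e j y)) has_derivative dE j x) (at x)"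
    and frame: "\<forall>x\<in>U. \<forall>j k. gR (dF x (e j x)) (dF x (e k x)) = (if j = k then 1 else 0)"
    and theta_deriv: "\<forall>j. \<forall>x\<in>U. (\<theta> j has_derivative d\<theta> j x) (at x)"
    and angles: "\<forall>x\<in>U. \<forall>j. shapeA F d\<xi> x (e j x) =
        cos (2 * \<theta> j x) *\<^sub>R dF x (e j x) - sin (2 * \<theta> j x) *\<^sub>R Jv (dF x (e j x))"
  shows "\<forall>x\<in>U. \<forall>i j k.
           d\<theta> j x (e i x) = hcomp dF e dE i j j x - sform \<xi> d\<xi> x (e i x) / 2
         \<and> (j \<noteq> k \<longrightarrow> sin (\<theta> j x - \<theta> k x) * omega dF e dE j k i x
                       = cos (\<theta> j x - \<theta> k x) * hcomp dF e dE k i j x)"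
  proof (intro ballI allI)
  fix x i j k assume xU: "x \<in> U"
  define E where "E = (\<lambda>a y. dF y (e a y))"
  define lam where "lam = (\<lambda>y. cbil (\<xi> y) (F y))"
  have Fd: "(F has_derivative dF y) (at y)" if "y \<in> U" for y using F_deriv that by blast
  have dFd: "((\<lambda>z. dF z v) has_derivative (\<lambda>w. d2F y w v)) (at y)" if "y \<in> U" for y v
    using dF_deriv that by blast
  have xid: "(\<xi> has_derivative d\<xi> y) (at y)" if "y \<in> U" for y using xi_deriv that by blast
  have Ed: "(E a has_derivative dE a y) (at y)" if "y \<in> U" for a y
    using E_deriv that unfolding E_def by blast
  have orth: "cinner (E a y) (E b y) = (if a = b then 1 else 0)" if "y \<in> U" for a b y
  proof -
    have re: "Re (cinner (E a y) (E b y)) = (if a = b then 1 else 0)"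
      using frame that unfolding E_def gR_def by simp
    have "gR (Jv (E a y)) (E b y) = 0" using F_lagrangian that unfolding E_def by simp
    hence im: "Im (cinner (E a y) (E b y)) = 0" by (simp add: gR_J_left)
    show ?thesis using re im by (simp add: complex_eq_iff)
  qed
  have xi_form: "\<xi> y = lam y *s cconj (F y)" if yU: "y \<in> U" for y
  proof -
    define v where "v = \<xi> y - lam y *s cconj (F y)"
    have FF: "cinner (F y) (F y) = 1" "cbil (F y) (F y) = 0" using F_on_Q yU by auto
    have c1: "cinner v (F y) = 0"
      using xi_normal yU FF unfolding v_def by (simp add: cinner_diff_left cinner_scale_left cinner_cconj_left)
    have "cbil (F y) v = cbil v (F y)" by (rule cbil_comm)
    also have "\<dots> = cbil (\<xi> y) (F y) - lam y * cinner (F y) (F y)"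
      unfolding v_def by (simp only: cbil_diff_left cbil_scale_left cbil_cconj_left)
    also have "\<dots> = 0" using FF unfolding lam_def by simp
    finally have c2: "cbil (F y) v = 0" .
    have QTv: "QT (F y) v" using c1 c2 by (simp add: QT_def)
    have QTJv: "QT (F y) (Jv v)" using c1 c2 by (simp add: QT_def cinner_Jv_left cbil_Jv_right)
    have "gR (\<xi> y) v = 0" "gR (\<xi> y) (Jv v) = 0" using xi_normal yU QTv QTJv by auto
    hence ci: "cinner (\<xi> y) v = 0" by (simp only: gR_J_right) (simp add: gR_Re complex_eq_iff)
    have "cinner v v = cinner (\<xi> y - lam y *s cconj (F y)) v" by (simp only: v_def)
    also have "\<dots> = cinner (\<xi> y) v - lam y * cnj (cbil (F y) v)"
      by (simp add: cinner_diff_left cinner_scale_left cinner_cconj_left)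
    also have "\<dots> = 0" using ci c2 by simp
    finally have "v = 0" by (rule cinner_self_zero)
    thus ?thesis unfolding v_def by (simp only: right_minus_eq)
  qed
  have lam_unit: "lam y * cnj (lam y) = 1" if yU: "y \<in> U" for y
  proof -
    have "1 = cinner (\<xi> y) (\<xi> y)" using xi_unit yU by simp
    also have "\<dots> = cinner (lam y *s cconj (F y)) (lam y *s cconj (F y))" by (simp only: xi_form[OF yU])
    also have "\<dots> = lam y * (cnj (lam y) * cnj (cinner (F y) (F y)))"
      by (simp only: cinner_scale_left cinner_scale_right cinner_cconj_both mult.left_commute)
    also have "\<dots> = lam y * cnj (lam y)" using F_on_Q yU by simp
    finally show ?thesis by simp
  qed
  have dcb: "cbil (F y) (dF y w) = 0" if yU: "y \<in> U" for y w
  proof -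
    have D: "((\<lambda>z. cbil (F z) (F z)) has_derivative (\<lambda>w. cbil (dF y w) (F y) + cbil (F y) (dF y w))) (at y)"
      by (rule has_derivative_cbil[OF Fd[OF yU] Fd[OF yU]])
    have "cbil (dF y w) (F y) + cbil (F y) (dF y w) = 0"
      using deriv_const_on_open[OF U_open yU _ D, of 0 w] F_on_Q by simp
    thus ?thesis by (simp add: cbil_comm[of "dF y w"])
  qed
  have dci: "cinner (d2F y X w) (F y) + cinner (dF y w) (dF y X) = 0" if yU: "y \<in> U" for y w X
  proof -
    have D: "((\<lambda>z. cinner (dF z w) (F z)) has_derivative (\<lambda>X. cinner (d2F y X w) (F y) + cinner (dF y w) (dF y X))) (at y)"
      by (rule has_derivative_cinner[OF dFd[OF yU] Fd[OF yU]])
    show ?thesis using deriv_const_on_open[OF U_open yU _ D, of 0 X] F_horizontal by simp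
  qed
  have cbx: "cbil (\<xi> y) (dF y w) = 0" if yU: "y \<in> U" for y w
    using F_horizontal yU by (simp add: xi_form[OF yU] cbil_scale_left cbil_cconj_left)
  have Cf: "cbil (d\<xi> y X) (dF y w) = lam y * cinner (dF y w) (dF y X)" if yU: "y \<in> U" for y w X
  proof -
    have D: "((\<lambda>z. cbil (\<xi> z) (dF z w)) has_derivative (\<lambda>X. cbil (d\<xi> y X) (dF y w) + cbil (\<xi> y) (d2F y X w))) (at y)"
      by (rule has_derivative_cbil[OF xid[OF yU] dFd[OF yU]])
    have z: "cbil (d\<xi> y X) (dF y w) + cbil (\<xi> y) (d2F y X w) = 0"
      using deriv_const_on_open[OF U_open yU _ D, of 0 X] cbx by simp
    have "cbil (\<xi> y) (d2F y X w) = lam y * cinner (d2F y X w) (F y)"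
      by (simp add: xi_form[OF yU] cbil_scale_left cbil_cconj_left)
    also have "\<dots> = - lam y * cinner (dF y w) (dF y X)"
    proof -
      have h: "cinner (d2F y X w) (F y) = - cinner (dF y w) (dF y X)"
        using dci[OF yU, of X w] by (simp only: eq_neg_iff_add_eq_0)
      show ?thesis by (simp add: h)
    qed
    finally have q: "cbil (\<xi> y) (d2F y X w) = - lam y * cinner (dF y w) (dF y X)" .
    have "cbil (d\<xi> y X) (dF y w) = - cbil (\<xi> y) (d2F y X w)" using z by (simp only: eq_neg_iff_add_eq_0)
    thus ?thesis using q by simp
  qed
  have Ef: "cbil (projQ (F y) (d\<xi> y X)) (dF y w) = lam y * cinner (dF y w) (dF y X)" if yU: "y \<in> U" for y w X
    using Cf[OF yU] dcb[OF yU] F_horizontal yU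
    by (simp add: projQ_def cbil_diff_left cbil_scale_left cbil_cconj_left)
  have Ff: "cbil (E b y) (E a y) = (if a = b then - (lam y * cis (2 * \<theta> b y)) else 0)" if yU: "y \<in> U" for a b y
  proof -
    have vec: "cos t *\<^sub>R v - sin t *\<^sub>R Jv v = cis (- t) *s v" for t and v :: "complex^'c"
      by (simp add: vec_eq_iff scaleR_scale Jv_scale complex_eq_iff)
    have "projQ (F y) (d\<xi> y (e b y)) = - shapeA F d\<xi> y (e b y)" by (simp add: shapeA_def)
    also have "\<dots> = - (cis (- (2 * \<theta> b y)) *s E b y)"
      using angles yU vec unfolding E_def by simp
    finally have P: "projQ (F y) (d\<xi> y (e b y)) = - (cis (- (2 * \<theta> b y)) *s E b y)" .
    have "- cis (- (2 * \<theta> b y)) * cbil (E b y) (E a y) = lam y * cinner (E a y) (E b y)"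
      using Ef[OF yU, of "e b y" "e a y"] unfolding P E_def
      by (simp add: cbil_minus_left cbil_scale_left)
    hence "cis (2 * \<theta> b y) * (- cis (- (2 * \<theta> b y)) * cbil (E b y) (E a y)) =
           cis (2 * \<theta> b y) * (lam y * (if a = b then 1 else 0))" using orth[OF yU] by simp
    moreover have "cis (2 * \<theta> b y) * cis (- (2 * \<theta> b y)) = 1" by (simp add: cis_mult)
    ultimately show ?thesis by (auto simp: algebra_simps) (metis minus_minus)
  qed
  show "d\<theta> j x (e i x) = hcomp dF e dE i j j x - sform \<xi> d\<xi> x (e i x) / 2
         \<and> (j \<noteq> k \<longrightarrow> sin (\<theta> j x - \<theta> k x) * omega dF e dE j k i x
                       = cos (\<theta> j x - \<theta> k x) * hcomp dF e dE k i j x)"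
  proof -
  define X where "X = e i x"
  define c where "c = (\<lambda>b. cis (2 * \<theta> b x))"
  have cinv: "c b * cnj (c b) = 1" for b unfolding c_def by (simp add: cis_cnj cis_mult)
  have lu: "lam x * cnj (lam x) = 1" by (rule lam_unit[OF xU])
  have bil_E: "cbil u (E b x) = - (lam x * c b) * cinner u (E b x)" for u b
  proof -
    have bb: "cbil (E b x) (E b x) = - (lam x * c b)" using Ff[OF xU, of b b] by (simp add: c_def)
    have "cbil (E b x) (E b x) * cnj (cbil (E b x) (E b x)) = (lam x * cnj (lam x)) * (c b * cnj (c b))"
      by (simp only: bb) (simp add: algebra_simps)
    hence u1: "cbil (E b x) (E b x) * cnj (cbil (E b x) (E b x)) = 1" using lu cinv by simp
    have cf: "cconj (E b x) = cnj (cbil (E b x) (E b x)) *s E b x"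
      by (rule conj_formula[OF _ u1]) (simp add: orth[OF xU])
    have "cbil u (E b x) = cinner u (cconj (E b x))" by (simp add: cinner_cconj_right)
    also have "\<dots> = cbil (E b x) (E b x) * cinner u (E b x)"
      by (simp only: cf cinner_scale_right complex_cnj_cnj)
    finally show ?thesis by (simp only: bb)
  qed
  have H1: "cinner (dE a x X) (E b x) + cinner (E a x) (dE b x X) = 0" for a b
  proof -
    have D: "((\<lambda>y. cinner (E a y) (E b y)) has_derivative
       (\<lambda>X. cinner (dE a x X) (E b x) + cinner (E a x) (dE b x X))) (at x)"
      by (rule has_derivative_cinner[OF Ed[OF xU] Ed[OF xU]])
    show ?thesis using deriv_const_on_open[OF U_open xU _ D, of "if a = b then 1 else 0" X] orth by simp
  qed
  have H2ne: "cbil (dE b x X) (E a x) + cbil (E b x) (dE a x X) = 0" if "a \<noteq> b" for a b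
  proof -
    have D: "((\<lambda>y. cbil (E b y) (E a y)) has_derivative
       (\<lambda>X. cbil (dE b x X) (E a x) + cbil (E b x) (dE a x X))) (at x)"
      by (rule has_derivative_cbil[OF Ed[OF xU] Ed[OF xU]])
    show ?thesis using deriv_const_on_open[OF U_open xU _ D, of 0 X] Ff that by simp
  qed
  define Dl where "Dl = cbil (d\<xi> x X) (F x) + cbil (\<xi> x) (dF x X)"
  define d where "d = d\<theta> j x X"
  have H2eq: "cbil (dE j x X) (E j x) + cbil (E j x) (dE j x X)
      = - (lam x * (\<i> * complex_of_real (2 * d) * c j) + Dl * c j)"
  proof -
    have D: "((\<lambda>y. cbil (E j y) (E j y)) has_derivative
       (\<lambda>X. cbil (dE j x X) (E j x) + cbil (E j x) (dE j x X))) (at x)"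
      by (rule has_derivative_cbil[OF Ed[OF xU] Ed[OF xU]])
    have Dlam: "(lam has_derivative (\<lambda>X. cbil (d\<xi> x X) (F x) + cbil (\<xi> x) (dF x X))) (at x)"
      unfolding lam_def by (rule has_derivative_cbil[OF xid[OF xU] Fd[OF xU]])
    have Dt: "((\<lambda>y. 2 * \<theta> j y) has_derivative (\<lambda>w. 2 * d\<theta> j x w)) (at x)"
      using theta_deriv xU by (intro bounded_linear.has_derivative[OF bounded_linear_mult_right]) blast
    have Dc: "((\<lambda>y. cis (2 * \<theta> j y)) has_derivative
        (\<lambda>w. \<i> * complex_of_real (2 * d\<theta> j x w) * cis (2 * \<theta> j x))) (at x)"
      by (rule has_derivative_cis[OF Dt])
    have D2: "((\<lambda>y. - (lam y * cis (2 * \<theta> j y))) has_derivative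
        (\<lambda>w. - (lam x * (\<i> * complex_of_real (2 * d\<theta> j x w) * cis (2 * \<theta> j x))
              + (cbil (d\<xi> x w) (F x) + cbil (\<xi> x) (dF x w)) * cis (2 * \<theta> j x)))) (at x)"
      by (rule has_derivative_minus[OF has_derivative_mult[OF Dlam Dc]])
    have "(\<lambda>X. cbil (dE j x X) (E j x) + cbil (E j x) (dE j x X)) =
      (\<lambda>w. - (lam x * (\<i> * complex_of_real (2 * d\<theta> j x w) * cis (2 * \<theta> j x))
              + (cbil (d\<xi> x w) (F x) + cbil (\<xi> x) (dF x w)) * cis (2 * \<theta> j x)))"
      by (rule deriv_eq_on_open[OF U_open xU _ D D2]) (simp add: Ff)
    from fun_cong[OF this, of X] show ?thesis by (simp add: Dl_def d_def c_def)
  qed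
  have Dl': "Dl = cbil (d\<xi> x X) (F x)" unfolding Dl_def using cbx[OF xU, of X] by simp
  have sf: "sform \<xi> d\<xi> x X = Im (cnj (lam x) * Dl)"
  proof -
    have "sform \<xi> d\<xi> x X = Im (cinner (d\<xi> x X) (\<xi> x))" by (simp add: sform_def gR_J_right)
    also have "\<dots> = Im (cinner (d\<xi> x X) (lam x *s cconj (F x)))" by (simp only: xi_form[OF xU])
    also have "\<dots> = Im (cnj (lam x) * Dl)" by (simp add: Dl' cinner_scale_right cinner_cconj_right)
    finally show ?thesis .
  qed
  have claim1': "d = gR (dE j x X) (Jv (E j x)) - sform \<xi> d\<xi> x X / 2"
  proof -
    define a where "a = cinner (dE j x X) (E j x)"
    have "cbil (dE j x X) (E j x) + cbil (E j x) (dE j x X) = 2 * cbil (dE j x X) (E j x)"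
      by (simp add: cbil_comm[of "E j x"])
    also have "\<dots> = - 2 * (lam x * c j) * a" by (simp add: bil_E a_def)
    finally have eq: "- 2 * (lam x * c j) * a = - (lam x * (\<i> * complex_of_real (2 * d) * c j) + Dl * c j)"
      using H2eq by simp
    have "2 * a = \<i> * complex_of_real (2 * d) + cnj (lam x) * Dl"
      using eq lu cinv[of j] by algebra
    hence "Im (2 * a) = Im (\<i> * complex_of_real (2 * d) + cnj (lam x) * Dl)" by simp
    hence "2 * Im a = 2 * d + sform \<xi> d\<xi> x X" by (simp add: sf)
    moreover have "Im a = gR (dE j x X) (Jv (E j x))" by (simp add: a_def gR_J_right)
    ultimately show ?thesis by simp
  qed
  have claim2: "sin (\<theta> j x - \<theta> k x) * omega dF e dE j k i x
                       = cos (\<theta> j x - \<theta> k x) * hcomp dF e dE k i j x" if jk: "j \<noteq> k"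
  proof -
    define a where "a = cinner (dE j x X) (E k x)"
    define b where "b = cinner (dE k x X) (E j x)"
    have h1: "a + cnj b = 0" using H1[of j k] by (simp add: a_def b_def cinner_sym[of "E j x"])
    have h2: "- (lam x * c j) * b + - (lam x * c k) * a = 0"
      using H2ne[of j k] jk by (simp add: bil_E cbil_comm[of "E k x"] a_def b_def)
    have e1: "c k * a = c j * cnj a"
    proof -
      have "cnj b = - a" using h1 by (simp add: eq_neg_iff_add_eq_0 add.commute)
      hence bb: "b = - cnj a" by (metis complex_cnj_cnj complex_cnj_minus)
      show ?thesis using h2 lu unfolding bb by algebra
    qed
    define t where "t = \<theta> j x - \<theta> k x"
    have "cis (- (\<theta> j x + \<theta> k x)) * (c k * a) = cis (- (\<theta> j x + \<theta> k x)) * (c j * cnj a)"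
      by (simp only: e1)
    hence "cis (- (\<theta> j x + \<theta> k x) + 2 * \<theta> k x) * a = cis (- (\<theta> j x + \<theta> k x) + 2 * \<theta> j x) * cnj a"
      by (simp only: c_def mult.assoc[symmetric] cis_mult)
    moreover have q1: "- (\<theta> j x + \<theta> k x) + 2 * \<theta> k x = - t" unfolding t_def by simp
    moreover have q2: "- (\<theta> j x + \<theta> k x) + 2 * \<theta> j x = t" unfolding t_def by simp
    ultimately have "cis (- t) * a = cis t * cnj a" by (simp only: q1 q2)
    hence "Im (cis (- t) * a) = Im (cis t * cnj a)" by simp
    hence "cos t * Im a - sin t * Re a = - cos t * Im a + sin t * Re a" by simp
    hence r: "sin t * Re a = cos t * Im a" by linarith
    have "Re a = omega dF e dE j k i x" by (simp add: a_def omega_def X_def E_def gR_def)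
    moreover have "Im a = hcomp dF e dE k i j x" by (simp add: a_def hcomp_def X_def E_def gR_J_right)
    ultimately show ?thesis using r unfolding t_def by simp
  qed
  have symm: "hcomp dF e dE i j j x = gR (dE j x X) (Jv (E j x))"
  proof -
    define T where "T = (\<lambda>w u z. gR (d2F x w u) (Jv (dF x z)))"
    have linF: "linear (dF x)" using Fd[OF xU] has_derivative_linear by blast
    have lin2: "linear (\<lambda>w. d2F x w u)" for u using dFd[OF xU, of u] has_derivative_linear by blast
    have linT1: "linear (\<lambda>w. T w u z)" for u z
    proof -
      have "linear ((\<lambda>a. gR a (Jv (dF x z))) \<circ> (\<lambda>w. d2F x w u))"
        by (rule linear_compose[OF lin2]) (rule bounded_linear.linear[OF bl_gR_left])
      thus ?thesis by (simp add: T_def o_def)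
    qed
    have linT3: "linear (\<lambda>z. T w u z)" for w u
    proof -
      have "linear ((\<lambda>z. gR (d2F x w u) (Jv z)) \<circ> dF x)" by (rule linear_compose[OF linF lin_gR_J])
      thus ?thesis by (simp add: T_def o_def)
    qed
    have Lag0: "gR (dF x v) (Jv (dF x z)) = 0" for v z
    proof -
      have "gR (Jv (dF x z)) (dF x v) = 0" using F_lagrangian xU by blast
      thus ?thesis by (subst gR_sym)
    qed
    have Dform: "dE a x w = dF x (de a x w) + (\<Sum>m\<in>UNIV. e a x $ m *\<^sub>R d2F x w (axis m 1))" for a w
    proof -
      have rep: "dF y (e a y) = (\<Sum>m\<in>UNIV. e a y $ m *\<^sub>R dF y (axis m 1))" if "y \<in> U" for y
        using lin_basis[OF has_derivative_linear[OF Fd[OF that]]] .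
      have ed: "((\<lambda>y. e a y $ m) has_derivative (\<lambda>h. de a x h $ m)) (at x)" for m
        using e_deriv xU by (intro bounded_linear.has_derivative[OF bounded_linear_vec_nth]) blast
      have D: "((\<lambda>y. \<Sum>m\<in>UNIV. e a y $ m *\<^sub>R dF y (axis m 1)) has_derivative
         (\<lambda>h. \<Sum>m\<in>UNIV. e a x $ m *\<^sub>R d2F x h (axis m 1) + de a x h $ m *\<^sub>R dF x (axis m 1))) (at x)"
        by (intro has_derivative_sum has_derivative_scaleR ed dFd[OF xU])
      have Ea: "((\<lambda>y. dF y (e a y)) has_derivative dE a x) (at x)" using E_deriv xU by blast
      have "dE a x = (\<lambda>h. \<Sum>m\<in>UNIV. e a x $ m *\<^sub>R d2F x h (axis m 1) + de a x h $ m *\<^sub>R dF x (axis m 1))"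
        by (rule deriv_eq_on_open[OF U_open xU _ Ea D]) (simp add: rep)
      hence "dE a x w = (\<Sum>m\<in>UNIV. e a x $ m *\<^sub>R d2F x w (axis m 1)) + (\<Sum>m\<in>UNIV. de a x w $ m *\<^sub>R dF x (axis m 1))"
        by (simp add: sum.distrib)
      also have "(\<Sum>m\<in>UNIV. de a x w $ m *\<^sub>R dF x (axis m 1)) = dF x (de a x w)"
        using lin_basis[OF linF, of "de a x w"] by simp
      finally show ?thesis by simp
    qed
    have Hexp: "gR (dE a x w) (Jv (dF x z)) = (\<Sum>m\<in>UNIV. e a x $ m * T w (axis m 1) z)" for a w z
    proof -
      have L: "linear (\<lambda>v. gR v (Jv (dF x z)))" by (rule bounded_linear.linear[OF bl_gR_left])
      show ?thesis unfolding Dform T_def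
        by (simp add: real_vector.linear_add[OF L] real_vector.linear_sum[OF L] linear_cmul[OF L] Lag0)
    qed
    have Sym12: "T w u z = T u w z" for w u z
    proof -
      define c0 where "c0 = Jv (dF x z)"
      have d1: "\<forall>y\<in>U. ((\<lambda>y. gR (F y) c0) has_derivative (\<lambda>v. gR (dF y v) c0)) (at y)"
        using Fd by (auto intro: bounded_linear.has_derivative[OF bl_gR_left])
      have d2: "((\<lambda>y. gR (dF y v) c0) has_derivative (\<lambda>w. gR (d2F x w v) c0)) (at x)" for v
        by (rule bounded_linear.has_derivative[OF bl_gR_left dFd[OF xU]])
      show ?thesis
        using second_deriv_sym[where \<phi>="\<lambda>y. gR (F y) c0" and \<phi>'="\<lambda>y v. gR (dF y v) c0"
            and B="\<lambda>w v. gR (d2F x w v) c0", OF U_open xU d1 d2]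
        unfolding T_def c0_def .
    qed
    have Sym23: "T w u z = T w z u" for w u z
    proof -
      have D: "((\<lambda>y. - Im (cinner (dF y u) (dF y z))) has_derivative
          (\<lambda>w. - Im (cinner (d2F x w u) (dF x z) + cinner (dF x u) (d2F x w z)))) (at x)"
        by (intro has_derivative_minus bounded_linear.has_derivative[OF bounded_linear_Im]
              has_derivative_cinner dFd[OF xU])
      have "- Im (cinner (d2F x w u) (dF x z) + cinner (dF x u) (d2F x w z)) = 0"
        using deriv_const_on_open[OF U_open xU _ D, of 0 w] F_lagrangian by (simp add: gR_J_left)
      thus ?thesis unfolding T_def by (simp add: gR_J_right cinner_sym[of "dF x u"])
    qed
    have "hcomp dF e dE i j j x = (\<Sum>m\<in>UNIV. e j x $ m * T (e j x) (axis m 1) (e i x))"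
      by (simp add: hcomp_def Hexp)
    also have "\<dots> = (\<Sum>m\<in>UNIV. e j x $ m * T (axis m 1) (e j x) (e i x))"
      by (intro sum.cong refl arg_cong2[where f="(*)"] Sym12)
    also have "\<dots> = T (e j x) (e j x) (e i x)"
      using lin_basis[OF linT1[of "e j x" "e i x"], of "e j x"] by simp
    also have "\<dots> = T (e j x) (e i x) (e j x)" by (rule Sym23)
    also have "\<dots> = T (e i x) (e j x) (e j x)" by (rule Sym12)
    also have "\<dots> = (\<Sum>m\<in>UNIV. e j x $ m * T (e i x) (e j x) (axis m 1))"
      using lin_basis[OF linT3[of "e i x" "e j x"], of "e j x"] by simp
    also have "\<dots> = (\<Sum>m\<in>UNIV. e j x $ m * T (e i x) (axis m 1) (e j x))"
      by (intro sum.cong refl arg_cong2[where f="(*)"] Sym23)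
    also have "\<dots> = gR (dE j x X) (Jv (E j x))"
      by (simp add: Hexp X_def E_def)
    finally show ?thesis .
  qed
  show ?thesis using claim1' claim2 symm unfolding d_def X_def by simp
  qed
qed


end
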